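(* For every $d\ge 1$ there is a constant $C_d$ such that the following holds. Let $\sigma\in(0,1)$, let $B$ be a ball of radius $r>0$ in $\mathbb{R}^d$, and let $L$ be a finite set of closed line segments in $\mathbb{R}^d$ such that (i) $L$ is $\sigma$-exposed, (ii) every segment of $L$ intersects $B$, and (iii) every segment of $L$ has length at least $r$. Then $|L|\le C_d/\sigma^{2d+2}$.
   Context: For sets $X, Y\subseteq\mathbb{R}^d$ and $\sigma>0$, $X$ $\sigma$-shadows $Y$ if $\max_{q\in Y} \mathrm{dist}(q, X) \le \sigma\cdot \mathrm{diam}(Y)$, where $\mathrm{dist}(q,X)=\min_{p\in X}\|q-p\|$. A set of objects is $\sigma$-exposed if no object in the set $\sigma$-shadows another (distinct) object of the set. *)

theory Defs
  imports "HOL-Analysis.Analysis"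
begin

definition shadows :: "real \<Rightarrow> 'a::euclidean_space set \<Rightarrow> 'a set \<Rightarrow> bool" where
  "shadows \<sigma> X Y \<longleftrightarrow> (\<forall>q\<in>Y. infdist q X \<le> \<sigma> * diameter Y)"

definition exposed :: "real \<Rightarrow> 'a::euclidean_space set set \<Rightarrow> bool" where
  "exposed \<sigma> L \<longleftrightarrow> (\<forall>X\<in>L. \<forall>Y\<in>L. X \<noteq> Y \<longrightarrow> \<not> shadows \<sigma> X Y)"

end

theory Submission
  imports Defs
begin

lemma diam_seg:
  fixes a b :: "'a::euclidean_space"
  shows "diameter (closed_segment a b) = dist a b"
proof (rule antisym)
  show "diameter (closed_segment a b) \<le> dist a b"
  proof (rule diameter_le)
    show "closed_segment a b \<noteq> {} \<or> 0 \<le> dist a b" by simp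
    fix x y assume "x \<in> closed_segment a b" "y \<in> closed_segment a b"
    then obtain u v where u: "x = (1 - u) *\<^sub>R a + u *\<^sub>R b" "0 \<le> u" "u \<le> 1"
      and v: "y = (1 - v) *\<^sub>R a + v *\<^sub>R b" "0 \<le> v" "v \<le> 1"
      by (auto simp: in_segment)
    have "x - y = (v - u) *\<^sub>R (a - b)" unfolding u(1) v(1) by (simp add: algebra_simps)
    hence "norm (x - y) = \<bar>v - u\<bar> * dist a b" by (simp add: dist_norm)
    also have "\<dots> \<le> 1 * dist a b" using u v by (intro mult_right_mono) auto
    finally show "norm (x - y) \<le> dist a b" by simp
  qed
  show "dist a b \<le> diameter (closed_segment a b)"
    by (rule diameter_bounded_bound) (auto intro: compact_imp_bounded)
qed

lemma endpoint_close:
  fixes X :: "'a::euclidean_space set"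
  assumes "0 < lY" "lY \<le> lX" "e \<in> X" "p \<in> X" "convex X" "dist p c \<le> r"
    and nb: "norm ((1/lY) *\<^sub>R (f - c) - (1/lX) *\<^sub>R (e - c)) \<le> \<sigma>/2"
    and sc: "(1 - lY/lX) * r \<le> \<sigma>*lY/2"
  shows "\<exists>q\<in>X. dist f q \<le> \<sigma>*lY"
proof -
  define t where "t = lY/lX"
  have lX: "0 < lX" using assms by linarith
  have t01: "0 \<le> t" "t \<le> 1" using assms lX by (auto simp: t_def field_simps)
  define q where "q = (1-t) *\<^sub>R p + t *\<^sub>R e"
  have qX: "q \<in> X" unfolding q_def using assms t01 by (intro convexD) auto
  have eq: "f - q = lY *\<^sub>R ((1/lY) *\<^sub>R (f - c) - (1/lX) *\<^sub>R (e - c)) - (1-t) *\<^sub>R (p - c)"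
    using assms lX by (simp add: q_def t_def algebra_simps)
  have "dist f q = norm (f - q)" by (simp add: dist_norm)
  also have "\<dots> \<le> norm (lY *\<^sub>R ((1/lY) *\<^sub>R (f - c) - (1/lX) *\<^sub>R (e - c))) + norm ((1-t) *\<^sub>R (p - c))"
    unfolding eq by (rule norm_triangle_ineq4)
  also have "\<dots> = lY * norm ((1/lY) *\<^sub>R (f - c) - (1/lX) *\<^sub>R (e - c)) + (1-t) * dist p c"
    using assms t01 by (simp add: dist_norm)
  also have "\<dots> \<le> lY * (\<sigma>/2) + (1-t) * r"
    using assms t01 by (intro add_mono mult_left_mono) auto
  also have "\<dots> \<le> \<sigma>*lY" using sc by (simp add: t_def field_simps)
  finally show ?thesis using qX by blast
qed

lemma shadow_key:
  fixes aX bX aY bY c p :: "'a::euclidean_space"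
  assumes lY: "0 < dist aY bY" and le: "dist aY bY \<le> dist aX bX"
    and p: "p \<in> closed_segment aX bX" "dist p c \<le> r"
    and ua: "norm ((1/dist aY bY) *\<^sub>R (aY - c) - (1/dist aX bX) *\<^sub>R (aX - c)) \<le> \<sigma>/2"
    and ub: "norm ((1/dist aY bY) *\<^sub>R (bY - c) - (1/dist aX bX) *\<^sub>R (bX - c)) \<le> \<sigma>/2"
    and sc: "(1 - dist aY bY / dist aX bX) * r \<le> \<sigma> * dist aY bY / 2"
  shows "shadows \<sigma> (closed_segment aX bX) (closed_segment aY bY)"
proof -
  let ?X = "closed_segment aX bX"
  let ?l = "dist aY bY"
  obtain qa where qa: "qa \<in> ?X" "dist aY qa \<le> \<sigma> * ?l"
    using endpoint_close[OF lY le _ p(1) convex_closed_segment p(2) ua sc] by auto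
  obtain qb where qb: "qb \<in> ?X" "dist bY qb \<le> \<sigma> * ?l"
    using endpoint_close[OF lY le _ p(1) convex_closed_segment p(2) ub sc] by auto
  show ?thesis unfolding shadows_def diam_seg
  proof
    fix q assume "q \<in> closed_segment aY bY"
    then obtain s where s: "q = (1 - s) *\<^sub>R aY + s *\<^sub>R bY" "0 \<le> s" "s \<le> 1"
      by (auto simp: in_segment)
    define w where "w = (1 - s) *\<^sub>R qa + s *\<^sub>R qb"
    have wX: "w \<in> ?X" unfolding w_def using qa qb s by (intro convexD convex_closed_segment) auto
    have "q - w = (1 - s) *\<^sub>R (aY - qa) + s *\<^sub>R (bY - qb)"
      using s by (simp add: w_def algebra_simps)
    hence "dist q w \<le> norm ((1 - s) *\<^sub>R (aY - qa)) + norm (s *\<^sub>R (bY - qb))"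
      by (metis dist_norm norm_triangle_ineq)
    also have "\<dots> = (1 - s) * dist aY qa + s * dist bY qb"
      using s by (simp add: dist_norm)
    also have "\<dots> \<le> (1 - s) * (\<sigma> * ?l) + s * (\<sigma> * ?l)"
      using s qa qb by (intro add_mono mult_left_mono) auto
    also have "\<dots> = \<sigma> * ?l" by (simp add: algebra_simps)
    finally have "dist q w \<le> \<sigma> * ?l" .
    with infdist_le[OF wX, of q] show "infdist q ?X \<le> \<sigma> * ?l" by linarith
  qed
qed


lemma floor_eq_close:
  assumes "\<lfloor>x / \<delta>\<rfloor> = \<lfloor>y / \<delta>\<rfloor>" "0 < (\<delta>::real)"
  shows "\<bar>x - y\<bar> \<le> \<delta>"
proof -
  have "\<bar>x/\<delta> - y/\<delta>\<bar> < 1" using assms(1)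
    using floor_correct[of "x/\<delta>"] floor_correct[of "y/\<delta>"] by linarith
  hence "\<bar>x - y\<bar> / \<delta> < 1" using assms(2) by (simp add: diff_divide_distrib[symmetric])
  thus ?thesis using assms(2) by (simp add: field_simps)
qed

lemma frac18: "x / z * (18 / w) = 18 * x / (z * w)" for x z w :: real
  by simp

theorem mainTheorem7:
  "\<exists>C::real. \<forall>(\<sigma>::real) (r::real) (c::'a::euclidean_space) (L::'a set set).
      0 < \<sigma> \<and> \<sigma> < 1 \<and> 0 < r \<and> finite L
      \<and> (\<forall>S\<in>L. \<exists>a b. S = closed_segment a b)
      \<and> exposed \<sigma> L
      \<and> (\<forall>S\<in>L. S \<inter> cball c r \<noteq> {})
      \<and> (\<forall>S\<in>L. r \<le> diameter S)
      \<longrightarrow> real (card L) \<le> C / \<sigma> ^ (2 * DIM('a) + 2)"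
proof (intro exI allI impI)
  define n where "n = DIM('a)"
  have n1: "1 \<le> real n" unfolding n_def using DIM_positive[where 'a='a] by linarith
  fix \<sigma> r :: real and c :: 'a and L :: "'a set set"
  assume H: "0 < \<sigma> \<and> \<sigma> < 1 \<and> 0 < r \<and> finite L
      \<and> (\<forall>S\<in>L. \<exists>a b. S = closed_segment a b)
      \<and> exposed \<sigma> L
      \<and> (\<forall>S\<in>L. S \<inter> cball c r \<noteq> {})
      \<and> (\<forall>S\<in>L. r \<le> diameter S)"
  hence sp: "0 < \<sigma>" "\<sigma> < 1" "0 < r" "finite L" and segs: "\<forall>S\<in>L. \<exists>a b. S = closed_segment a b"
    and ex: "exposed \<sigma> L" and hit: "\<forall>S\<in>L. S \<inter> cball c r \<noteq> {}" and lg: "\<forall>S\<in>L. r \<le> diameter S"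
    by auto
  define ep where "ep = (\<lambda>S::'a set. SOME ab. S = closed_segment (fst ab) (snd ab))"
  define A where "A = (\<lambda>S. fst (ep S))"
  define B where "B = (\<lambda>S. snd (ep S))"
  have seg: "S = closed_segment (A S) (B S)" if "S \<in> L" for S
  proof -
    from bspec[OF segs that] obtain a b where ab: "S = closed_segment a b" by (elim exE)
    have ex: "\<exists>ab. S = closed_segment (fst ab) (snd ab)" by (rule exI[of _ "(a,b)"]) (simp only: fst_conv snd_conv ab)
    have "S = closed_segment (fst (ep S)) (snd (ep S))" unfolding ep_def by (rule someI_ex[OF ex])
    thus ?thesis by (simp add: A_def B_def)
  qed
  define len where "len = (\<lambda>S. dist (A S) (B S))"
  have lenr: "r \<le> len S" if "S \<in> L" for S
  proof -
    have "diameter S = diameter (closed_segment (A S) (B S))" using seg[OF that] by (rule arg_cong)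
    thus ?thesis using bspec[OF lg that] diam_seg[of "A S" "B S"] by (simp add: len_def)
  qed
  have lenpos: "0 < len S" if "S \<in> L" for S using lenr[OF that] sp by linarith
  have pt: "\<exists>p. p \<in> closed_segment (A S) (B S) \<and> dist p c \<le> r" if "S \<in> L" for S
  proof -
    have "closed_segment (A S) (B S) \<inter> cball c r \<noteq> {}" using hit that seg[OF that, symmetric] by simp
    thus ?thesis by (auto simp: dist_commute)
  qed
  define \<delta> where "\<delta> = \<sigma> / (2 * n)"
  have \<delta>pos: "0 < \<delta>" using sp n1 by (simp add: \<delta>_def)
  define gr where "gr = (\<lambda>u::'a. (\<lambda>i\<in>Basis. \<lfloor>(u \<bullet> i) / \<delta>\<rfloor>))"
  define h where "h = \<sigma> * r / 8"
  have hpos: "0 < h" using sp by (simp add: h_def)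
  define K where "K = nat \<lceil>16 / \<sigma>^2\<rceil>"
  define sk where "sk = (\<lambda>l. min (nat \<lfloor>l / h\<rfloor>) K)"
  define U where "U = (\<lambda>S. (1 / len S) *\<^sub>R (A S - c))"
  define V where "V = (\<lambda>S. (1 / len S) *\<^sub>R (B S - c))"
  define \<phi> where "\<phi> = (\<lambda>S. (gr (U S), gr (V S), sk (len S)))"
  define N where "N = \<lceil>4 * n / \<sigma>\<rceil>"
  define G where "G = PiE Basis (\<lambda>_::'a. {-N..N})"
  have nb: "norm ((1 / len S) *\<^sub>R (e - c)) \<le> 2" if SL: "S \<in> L" and eS: "e \<in> {A S, B S}" for S e
  proof -
    obtain p where p: "p \<in> closed_segment (A S) (B S)" "dist p c \<le> r" using pt[OF SL] by blast
    have "dist p e \<le> len S" using dist_in_closed_segment[OF p(1)] eS by (auto simp: len_def)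
    hence "norm (e - c) \<le> 2 * len S" using p(2) lenr[OF SL]
      using dist_triangle[of e c p] by (simp add: dist_norm norm_minus_commute)
    moreover have "norm ((1 / len S) *\<^sub>R (e - c)) = norm (e - c) / len S"
      using lenpos[OF SL] by simp
    ultimately show ?thesis using lenpos[OF SL] by (simp add: divide_le_eq)
  qed
  have grG: "gr u \<in> G" if "norm u \<le> 2" for u
    unfolding gr_def G_def
  proof (rule PiE_I)
    fix i :: 'a assume i: "i \<in> Basis"
    have ui: "\<bar>u \<bullet> i\<bar> \<le> 2" using Basis_le_norm[OF i, of u] that by linarith
    have e: "2 / \<delta> = 4 * n / \<sigma>" using sp n1 by (simp add: \<delta>_def field_simps)
    have "u \<bullet> i / \<delta> \<le> 2 / \<delta>" "- (2 / \<delta>) \<le> u \<bullet> i / \<delta>"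
      using ui \<delta>pos by (auto simp: field_simps)
    hence "u \<bullet> i / \<delta> \<le> N" "- N \<le> u \<bullet> i / \<delta>"
      unfolding N_def e using le_of_int_ceiling[of "4 * real n / \<sigma>"] by linarith+
    thus "(\<lambda>i\<in>Basis. \<lfloor>u \<bullet> i / \<delta>\<rfloor>) i \<in> {-N..N}" using i
      by (simp add: le_floor_iff floor_le_iff)
  qed auto
  have img: "\<phi> ` L \<subseteq> G \<times> G \<times> {..K}"
    using nb grG by (auto simp: \<phi>_def U_def V_def sk_def)
  have key: "shadows \<sigma> X Y" if XY: "X \<in> L" "Y \<in> L" "\<phi> X = \<phi> Y" "len Y \<le> len X" for X Y
  proof -
    have gU: "gr (U X) = gr (U Y)" and gV: "gr (V X) = gr (V Y)" and gs: "sk (len X) = sk (len Y)"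
      using XY(3) by (auto simp: \<phi>_def)
    have close: "norm (W Y - W X) \<le> \<sigma>/2" if "gr (W X) = gr (W Y)" for W :: "'a set \<Rightarrow> 'a"
    proof -
      have "\<bar>(W Y - W X) \<bullet> i\<bar> \<le> \<delta>" if i: "i \<in> Basis" for i
      proof -
        have "\<lfloor>W X \<bullet> i / \<delta>\<rfloor> = \<lfloor>W Y \<bullet> i / \<delta>\<rfloor>"
          using fun_cong[OF \<open>gr (W X) = gr (W Y)\<close>, of i] i by (simp add: gr_def)
        from floor_eq_close[OF this \<delta>pos] show ?thesis by (simp add: inner_diff_left abs_minus_commute)
      qed
      hence "(\<Sum>i\<in>Basis. \<bar>(W Y - W X) \<bullet> i\<bar>) \<le> of_nat (card (Basis::'a set)) * \<delta>"
        by (intro sum_bounded_above) auto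
      also have "\<dots> = \<sigma>/2" using n1 by (simp add: \<delta>_def n_def)
      finally show ?thesis using norm_le_l1[of "W Y - W X"] by linarith
    qed
    have ua: "norm (U Y - U X) \<le> \<sigma>/2" using close[of U] gU by simp
    have vb: "norm (V Y - V X) \<le> \<sigma>/2" using close[of V] gV by simp
    have lY: "0 < len Y" "r \<le> len Y" using lenpos lenr XY by auto
    have lX: "0 < len X" using lenpos XY by auto
    have sc: "(1 - len Y / len X) * r \<le> \<sigma> * len Y / 2"
    proof (cases "sk (len Y) < K")
      case True
      hence "sk (len Y) = nat \<lfloor>len Y / h\<rfloor>" "sk (len X) = nat \<lfloor>len X / h\<rfloor>"
        using gs by (auto simp: sk_def)
      moreover have "0 \<le> \<lfloor>len Y / h\<rfloor>" "0 \<le> \<lfloor>len X / h\<rfloor>" using lX lY hpos by auto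
      ultimately have "\<lfloor>len X / h\<rfloor> = \<lfloor>len Y / h\<rfloor>" using gs eq_nat_nat_iff by metis
      from floor_eq_close[OF this hpos] have d: "len X - len Y \<le> h" by simp
      have "(1 - len Y / len X) * r = (len X - len Y) * (r / len X)" using lX by (simp add: field_simps)
      also have "\<dots> \<le> h * 1"
        using d XY(4) lX lY sp by (intro mult_mono) (auto simp: field_simps)
      also have "\<dots> \<le> \<sigma> * len Y / 2" using lY sp by (simp add: h_def)
      finally show ?thesis .
    next
      case False
      hence "K \<le> nat \<lfloor>len Y / h\<rfloor>" by (simp add: sk_def)
      moreover have "0 \<le> \<lfloor>len Y / h\<rfloor>" using lY hpos by simp
      ultimately have "int K \<le> \<lfloor>len Y / h\<rfloor>" by (simp add: le_nat_iff)
      hence "real K \<le> len Y / h" by (simp add: le_floor_iff)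
      moreover have "16 / \<sigma>^2 \<le> real K" unfolding K_def by linarith
      ultimately have "16 / \<sigma>^2 \<le> len Y / h" by linarith
      hence "16 * h \<le> len Y * \<sigma>^2" using hpos sp by (simp add: field_simps)
      hence "2 * r * \<sigma> \<le> len Y * \<sigma>^2" by (simp add: h_def mult_ac)
      hence "2 * r \<le> len Y * \<sigma>" using sp by (simp add: power2_eq_square)
      moreover have "(1 - len Y / len X) * r \<le> r"
        using lY lX sp by (simp add: field_simps)
      ultimately have "(1 - len Y / len X) * r \<le> len Y * \<sigma> / 2" by linarith
      thus ?thesis by (simp add: mult_ac)
    qed
    obtain p where p: "p \<in> closed_segment (A X) (B X)" "dist p c \<le> r" using pt[OF XY(1)] by blast
    have "shadows \<sigma> (closed_segment (A X) (B X)) (closed_segment (A Y) (B Y))"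
      by (rule shadow_key[OF _ _ p]) (use lY XY(4) ua vb sc in \<open>simp_all add: len_def U_def V_def\<close>)
    thus ?thesis using seg[OF XY(1), symmetric] seg[OF XY(2), symmetric] by simp
  qed
  have inj: "inj_on \<phi> L"
  proof (rule inj_onI, rule ccontr)
    fix X Y assume XY: "X \<in> L" "Y \<in> L" "\<phi> X = \<phi> Y" "X \<noteq> Y"
    show False
    proof (cases "len Y \<le> len X")
      case True
      have "shadows \<sigma> X Y" using key[OF XY(1,2,3) True] .
      moreover have "\<not> shadows \<sigma> X Y" using ex XY(1,2,4) unfolding exposed_def by metis
      ultimately show False by contradiction
    next
      case False
      hence "len X \<le> len Y" by linarith
      have "shadows \<sigma> Y X" using key[OF XY(2,1) XY(3)[symmetric] \<open>len X \<le> len Y\<close>] .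
      moreover have "\<not> shadows \<sigma> Y X" using ex XY(1,2,4) unfolding exposed_def by metis
      ultimately show False by contradiction
    qed
  qed
  have N0: "0 \<le> N"
  proof -
    have "0 < 4 * real n / \<sigma>" using sp n1 by simp
    hence "(0::real) < of_int N" unfolding N_def using le_of_int_ceiling[of "4 * real n / \<sigma>"] by linarith
    thus ?thesis by simp
  qed
  have cardG: "card G = (nat (2*N+1)) ^ n"
    unfolding G_def by (simp add: card_PiE n_def)
  have "card L = card (\<phi> ` L)" using card_image[OF inj] by simp
  also have "\<dots> \<le> card (G \<times> G \<times> {..K})"
  proof (rule card_mono[OF _ img])
    have "finite G" unfolding G_def by (intro finite_PiE) auto
    thus "finite (G \<times> G \<times> {..K})" by simp
  qed
  also have "\<dots> = (nat (2*N+1)) ^ n * (nat (2*N+1)) ^ n * (K+1)"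
    by (simp add: card_cartesian_product cardG algebra_simps)
  finally have c1: "real (card L) \<le> real ((nat (2*N+1)) ^ n * (nat (2*N+1)) ^ n * (K+1))"
    by linarith
  have b1: "real (nat (2*N+1)) \<le> 11 * real n / \<sigma>"
  proof -
    have "real_of_int N \<le> 4 * n / \<sigma> + 1" unfolding N_def by linarith
    moreover have "1 \<le> n / \<sigma>" using n1 sp by (simp add: field_simps)
    moreover have "real (nat (2*N+1)) = 2 * real_of_int N + 1" using N0 by simp
    ultimately show ?thesis by (simp add: field_simps)
  qed
  have b2: "real (K+1) \<le> 18 / \<sigma>^2"
  proof -
    have c0: "0 \<le> \<lceil>16 / \<sigma>^2\<rceil>" using le_of_int_ceiling[of "16 / \<sigma>^2"] sp
      by (smt (verit) of_int_less_0_iff zero_le_divide_iff zero_le_power2)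
    have "real K = real_of_int \<lceil>16 / \<sigma>^2\<rceil>" unfolding K_def using c0 by simp
    hence "real K \<le> 16 / \<sigma>^2 + 1" using of_int_ceiling_le_add_one[of "16 / \<sigma>^2"] by linarith
    moreover have "1 \<le> 1 / \<sigma>^2" using sp by (simp add: field_simps power_le_one)
    ultimately show ?thesis by simp
  qed
  have "real ((nat (2*N+1)) ^ n * (nat (2*N+1)) ^ n * (K+1))
        = real (nat (2*N+1)) ^ n * real (nat (2*N+1)) ^ n * real (K+1)" by (simp only: of_nat_mult of_nat_power)
  also have "\<dots> \<le> (11 * real n / \<sigma>) ^ n * (11 * real n / \<sigma>) ^ n * (18 / \<sigma>^2)"
    using b1 b2 by (intro mult_mono power_mono) auto
  also have "\<dots> = ((11 * real n) ^ (2*n) / \<sigma> ^ (2*n)) * (18 / \<sigma>^2)"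
  proof -
    have "(11 * real n / \<sigma>) ^ n * (11 * real n / \<sigma>) ^ n = (11 * real n) ^ (2*n) / \<sigma> ^ (2*n)"
      by (simp add: power_divide mult_2 power_add)
    thus ?thesis by (simp only:)
  qed
  also have "\<dots> = (18 * (11 * real n) ^ (2*n)) / (\<sigma> ^ (2*n) * \<sigma>^2)"
    by (rule frac18)
  also have "\<dots> = (18 * (11 * real n) ^ (2*n)) / \<sigma> ^ (2 * n + 2)"
    by (simp only: power_add)
  finally show "real (card L) \<le> (18 * (11 * real DIM('a)) ^ (2*DIM('a))) / \<sigma> ^ (2 * DIM('a) + 2)"
    using c1 unfolding n_def by linarith
qed

end
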